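(* Let $p$ be an odd prime. There is a constant $C$ (independent of $n$ and of the function below) such that for all sufficiently large $n$ the following holds. For every $j:\mathbb{F}_{p^n}\to[0,1]$ there exists $j_2:\mathbb{F}_{p^n}\to\{0,1\}$ such that $\mathbb{E}(j_2)\ge\mathbb{E}(j)$, $|\Lambda_3(j_2)-\Lambda_3(j)|\le C p^{-n/3}$, and for every subspace $W$ of $\mathbb{F}_{p^n}$ of codimension at most $n^{1/2}$ and every $m\in\mathbb{F}_{p^n}$, $$|(j_2)_W(m)-j_W(m)|\le C/n.$$ (In the paper's notation: $\Lambda_3(j_2)=\Lambda_3(j)+O(p^{-n/3})$ and $(j_2)_W(m)=j_W(m)+O(1/n)$.)
   Context: $\mathbb{F}_{p^n}$ is regarded as an $n$-dimensional vector space over $\mathbb{F}_p$; "subspace" means $\mathbb{F}_p$-subspace. $\mathbb{E}(g)=p^{-n}\sum_m g(m)$; $\Lambda_3(f)=p^{-2n}\sum_{m,d} f(m)f(m+d)f(m+2d)$; for a subspace $W$, $f_W(m)=|W|^{-1}\sum_{w\in W} f(m+w)$. *)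

theory Defs
  imports "HOL-Computational_Algebra.Primes" Complex_Main
begin

text \<open>F_{p^n} as an n-dimensional F_p-vector space: vectors are functions
  nat => nat with coordinates in {0..<p} for i < n and 0 for i >= n.\<close>

definition V :: "nat \<Rightarrow> nat \<Rightarrow> (nat \<Rightarrow> nat) set" where
  "V p n = {x. \<forall>i. (i < n \<longrightarrow> x i < p) \<and> (n \<le> i \<longrightarrow> x i = 0)}"

definition vadd :: "nat \<Rightarrow> (nat \<Rightarrow> nat) \<Rightarrow> (nat \<Rightarrow> nat) \<Rightarrow> (nat \<Rightarrow> nat)" where
  "vadd p x y = (\<lambda>i. (x i + y i) mod p)"

definition smul :: "nat \<Rightarrow> nat \<Rightarrow> (nat \<Rightarrow> nat) \<Rightarrow> (nat \<Rightarrow> nat)" where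
  "smul p c x = (\<lambda>i. (c * x i) mod p)"

definition is_subspace :: "nat \<Rightarrow> nat \<Rightarrow> (nat \<Rightarrow> nat) set \<Rightarrow> bool" where
  "is_subspace p n W \<longleftrightarrow> W \<subseteq> V p n \<and> (\<lambda>_. 0) \<in> W \<and>
     (\<forall>x\<in>W. \<forall>y\<in>W. vadd p x y \<in> W) \<and> (\<forall>c<p. \<forall>x\<in>W. smul p c x \<in> W)"

definition codim :: "nat \<Rightarrow> nat \<Rightarrow> (nat \<Rightarrow> nat) set \<Rightarrow> real" where
  "codim p n W = real n - log (real p) (real (card W))"

definition Ex :: "nat \<Rightarrow> nat \<Rightarrow> ((nat \<Rightarrow> nat) \<Rightarrow> real) \<Rightarrow> real" where
  "Ex p n g = (\<Sum>m\<in>V p n. g m) / real p ^ n"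

definition Lambda3 :: "nat \<Rightarrow> nat \<Rightarrow> ((nat \<Rightarrow> nat) \<Rightarrow> real) \<Rightarrow> real" where
  "Lambda3 p n f = (\<Sum>m\<in>V p n. \<Sum>d\<in>V p n.
      f m * f (vadd p m d) * f (vadd p m (vadd p d d))) / real p ^ (2 * n)"

definition avgW :: "nat \<Rightarrow> (nat \<Rightarrow> nat) set \<Rightarrow> ((nat \<Rightarrow> nat) \<Rightarrow> real) \<Rightarrow> (nat \<Rightarrow> nat) \<Rightarrow> real" where
  "avgW p W f m = (\<Sum>w\<in>W. f (vadd p m w)) / real (card W)"

end

theory Submission imports Defs "HOL-Probability.Product_PMF" "HOL-Real_Asymp.Real_Asymp" begin

definition vz :: "nat \<Rightarrow> nat" where "vz = (\<lambda>_. 0)"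
definition vneg :: "nat \<Rightarrow> (nat \<Rightarrow> nat) \<Rightarrow> (nat \<Rightarrow> nat)" where "vneg p x = smul p (p - 1) x"

lemma V_alt: "V p n = PiE_dflt {..<n} 0 (\<lambda>_. {..<p})"
  by (rule set_eqI) (simp add: V_def PiE_dflt_def not_less)

lemma card_V: "card (V p n) = p ^ n"
  unfolding V_alt by (subst card_PiE_dflt) auto

lemma finite_V: "p > 0 \<Longrightarrow> finite (V p n)"
  unfolding V_alt by (intro finite_PiE_dflt) auto

lemma vadd_V: "p > 0 \<Longrightarrow> x \<in> V p n \<Longrightarrow> y \<in> V p n \<Longrightarrow> vadd p x y \<in> V p n"
  by (auto simp: V_def vadd_def)

lemma vneg_V: "p > 0 \<Longrightarrow> x \<in> V p n \<Longrightarrow> vneg p x \<in> V p n"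
  by (auto simp: V_def vneg_def smul_def)

lemma vz_V: "p > 0 \<Longrightarrow> vz \<in> V p n"
  by (auto simp: V_def vz_def)

lemma vadd_comm: "vadd p x y = vadd p y x"
  by (auto simp: vadd_def add.commute)

lemma vadd_assoc: "vadd p (vadd p x y) z = vadd p x (vadd p y z)"
  by (auto simp: vadd_def mod_add_left_eq mod_add_right_eq add.assoc)

lemma vadd_lcomm: "vadd p x (vadd p y z) = vadd p y (vadd p x z)"
  by (auto simp: vadd_def fun_eq_iff mod_add_right_eq add.left_commute)

lemmas vadd_ac = vadd_assoc vadd_comm vadd_lcomm

lemma vadd_vz: "p > 0 \<Longrightarrow> x \<in> V p n \<Longrightarrow> vadd p x vz = x"
proof -
  assume p: "p > 0" and x: "x \<in> V p n"
  have "x i < p" for i using x p by (cases "i < n") (auto simp: V_def)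
  thus ?thesis by (auto simp: vadd_def vz_def fun_eq_iff)
qed

lemma vadd_vneg: "p > 0 \<Longrightarrow> vadd p x (vneg p x) = vz"
proof -
  assume p: "p > 0"
  have "(x i + (p - 1) * x i mod p) mod p = 0" for i
  proof -
    have "(x i + (p - 1) * x i mod p) mod p = (x i + (p - 1) * x i) mod p"
      by (simp add: mod_add_right_eq)
    also have "x i + (p - 1) * x i = p * x i" using p by (cases p) auto
    finally show ?thesis by simp
  qed
  thus ?thesis by (auto simp: vadd_def vneg_def smul_def vz_def fun_eq_iff)
qed

lemma vadd_cancel:
  assumes "p > 0" "x \<in> V p n" "y \<in> V p n" "vadd p x a = vadd p y a"
  shows "x = y"
proof -
  have "vadd p (vadd p x a) (vneg p a) = vadd p (vadd p y a) (vneg p a)" using assms(4) by simp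
  thus ?thesis using assms(1-3) by (simp only: vadd_assoc vadd_vneg vadd_vz)
qed

lemma vadd_bij: "p > 0 \<Longrightarrow> a \<in> V p n \<Longrightarrow> bij_betw (\<lambda>m. vadd p m a) (V p n) (V p n)"
  apply (rule bij_betw_byWitness[where f' = "\<lambda>m. vadd p m (vneg p a)"])
  by (auto simp: vadd_assoc vadd_vneg vadd_vz vadd_comm[of p "vneg p a" a] vadd_V vneg_V)

lemma vadd_bij': "p > 0 \<Longrightarrow> a \<in> V p n \<Longrightarrow> bij_betw (\<lambda>m. vadd p a m) (V p n) (V p n)"
  using vadd_bij[of p a n] by (simp add: vadd_comm)

lemma double_zero:
  assumes "prime p" "odd p" "d \<in> V p n" "vadd p d d = vz"
  shows "d = vz"
proof -
  have "d i = 0" for i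
  proof -
    have "(d i + d i) mod p = 0" using assms(4) by (auto simp: vadd_def vz_def fun_eq_iff)
    hence "p dvd 2 * d i" by (simp add: mult_2 mod_eq_0_iff_dvd)
    moreover have "\<not> p dvd 2"
    proof
      assume "p dvd 2"
      hence "p \<le> 2" by (simp add: dvd_imp_le)
      moreover have "p \<ge> 2" using assms(1) prime_ge_2_nat by blast
      ultimately have "p = 2" by simp
      thus False using assms(2) by simp
    qed
    ultimately have "p dvd d i" using assms(1) prime_dvd_mult_nat by blast
    moreover have "d i < p" using assms(3) prime_gt_0_nat[OF assms(1)]
      by (cases "i < n") (auto simp: V_def)
    ultimately show ?thesis using dvd_imp_le by fastforce
  qed
  thus ?thesis by (auto simp: vz_def)
qed

lemma double_inj:
  assumes "prime p" "odd p" "m \<in> V p n"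
  shows "inj_on (\<lambda>d. vadd p m (vadd p d d)) (V p n)"
proof (rule inj_onI)
  fix x y assume x: "x \<in> V p n" and y: "y \<in> V p n" and e: "vadd p m (vadd p x x) = vadd p m (vadd p y y)"
  have p: "p > 0" using assms prime_gt_0_nat by auto
  have "vadd p x x = vadd p y y"
    using vadd_cancel[OF p, of "vadd p x x" n "vadd p y y" m] e x y p
    by (simp add: vadd_V vadd_comm)
  define z where "z = vadd p x (vneg p y)"
  have zV: "z \<in> V p n" using x y p by (simp add: z_def vadd_V vneg_V)
  have "vadd p z z = vadd p (vadd p (vadd p x x) (vneg p y)) (vneg p y)"
    unfolding z_def by (simp only: vadd_ac)
  also have "\<dots> = vadd p (vadd p (vadd p y y) (vneg p y)) (vneg p y)" using \<open>vadd p x x = vadd p y y\<close> by simp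
  also have "\<dots> = vz" using p y by (simp add: vadd_assoc vadd_vneg vadd_vz)
  finally have "z = vz" using double_zero[OF assms(1,2) zV] by simp
  hence "vadd p (vadd p x (vneg p y)) y = vadd p vz y" by (simp add: z_def)
  thus "x = y" using p x y
    by (simp add: vadd_assoc vadd_comm[of p "vneg p y" y] vadd_vneg vadd_vz vadd_comm[of p vz])
qed

lemma double_bij:
  assumes "prime p" "odd p" "m \<in> V p n"
  shows "bij_betw (\<lambda>d. vadd p m (vadd p d d)) (V p n) (V p n)"
proof -
  have p: "p > 0" using assms prime_gt_0_nat by auto
  have sub: "(\<lambda>d. vadd p m (vadd p d d)) ` V p n \<subseteq> V p n" using p assms by (auto intro!: vadd_V)
  show ?thesis unfolding bij_betw_def
    using double_inj[OF assms] sub finite_V[OF p]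
    by (simp add: endo_inj_surj)
qed


lemma abs_mult_le1: "\<bar>a\<bar> \<le> 1 \<Longrightarrow> \<bar>b\<bar> \<le> (1::real) \<Longrightarrow> \<bar>a * b\<bar> \<le> 1"
  by (simp add: abs_mult mult_le_one)

lemma vadd_self_eq:
  assumes "p > 0" "m \<in> V p n" "u \<in> V p n" "vadd p m u = m" shows "u = vz"
proof -
  have "vadd p u m = vadd p vz m" using assms vadd_vz[of p m n] by (simp add: vadd_comm)
  thus ?thesis using vadd_cancel[of p u n vz m] assms vz_V by blast
qed

lemma prod_list_delta:
  assumes "finite A" "set bs \<subseteq> A"
  shows "(\<Prod>x\<in>A. prod_list (map (\<lambda>y. if y = x then g x else 1) bs)) = prod_list (map g bs)"
  using assms(2)
proof (induction bs)
  case Nil thus ?case by simp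
next
  case (Cons y bs)
  have "(\<Prod>x\<in>A. prod_list (map (\<lambda>y'. if y' = x then g x else 1) (y # bs)))
      = (\<Prod>x\<in>A. (if y = x then g x else 1) * prod_list (map (\<lambda>y'. if y' = x then g x else 1) bs))"
    by simp
  also have "\<dots> = (\<Prod>x\<in>A. (if y = x then g x else 1)) * (\<Prod>x\<in>A. prod_list (map (\<lambda>y'. if y' = x then g x else 1) bs))"
    by (rule prod.distrib)
  also have "(\<Prod>x\<in>A. (if y = x then g x else 1)) = g y"
    using Cons.prems assms(1) by (simp add: prod.delta)
  finally show ?case using Cons by simp
qed

locale rr =
  fixes p n :: nat and j :: "(nat \<Rightarrow> nat) \<Rightarrow> real"
  assumes pp: "prime p" and po: "odd p" and jr: "\<And>m. m \<in> V p n \<Longrightarrow> 0 \<le> j m \<and> j m \<le> 1"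
begin

abbreviation VV where "VV \<equiv> V p n"
definition SS :: "((nat \<Rightarrow> nat) \<Rightarrow> bool) set" where "SS = PiE VV (\<lambda>_. UNIV :: bool set)"
definition w :: "((nat \<Rightarrow> nat) \<Rightarrow> bool) \<Rightarrow> real" where "w X = (\<Prod>x\<in>VV. if X x then j x else 1 - j x)"
definition EE :: "(((nat \<Rightarrow> nat) \<Rightarrow> bool) \<Rightarrow> real) \<Rightarrow> real" where "EE g = (\<Sum>X\<in>SS. w X * g X)"
definition ff :: "((nat \<Rightarrow> nat) \<Rightarrow> bool) \<Rightarrow> (nat \<Rightarrow> nat) \<Rightarrow> real" where "ff X x = of_bool (X x) - j x"

lemma p0: "p > 0" using pp prime_gt_0_nat by blast
lemma finV: "finite VV" using finite_V[OF p0] .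
lemma finSS: "finite SS" unfolding SS_def using finV by (intro finite_PiE) auto

lemma EP: "EE (\<lambda>X. \<Prod>x\<in>VV. h x (X x)) = (\<Prod>x\<in>VV. j x * h x True + (1 - j x) * h x False)"
proof -
  have "EE (\<lambda>X. \<Prod>x\<in>VV. h x (X x)) = (\<Sum>X\<in>SS. \<Prod>x\<in>VV. (if X x then j x else 1 - j x) * h x (X x))"
    unfolding EE_def w_def by (simp add: prod.distrib)
  also have "\<dots> = (\<Prod>x\<in>VV. \<Sum>b\<in>(UNIV::bool set). (if b then j x else 1 - j x) * h x b)"
    unfolding SS_def by (rule prod_sum_PiE[symmetric]) (use finV in auto)
  also have "\<dots> = (\<Prod>x\<in>VV. j x * h x True + (1 - j x) * h x False)"
    by (simp add: UNIV_bool add.commute)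
  finally show ?thesis .
qed

lemma w_nonneg: "w X \<ge> 0"
  unfolding w_def by (intro prod_nonneg) (use jr in auto)

lemma EE_one: "EE (\<lambda>_. 1) = 1"
  using EP[of "\<lambda>_ _. 1"] by simp

lemma EE_add: "EE (\<lambda>X. g X + h X) = EE g + EE h"
  unfolding EE_def by (simp add: distrib_left sum.distrib)
lemma EE_diff: "EE (\<lambda>X. g X - h X) = EE g - EE h"
  unfolding EE_def by (simp add: right_diff_distrib sum_subtractf)
lemma EE_cmult: "EE (\<lambda>X. c * g X) = c * EE g"
  unfolding EE_def by (simp add: sum_distrib_left mult_ac)
lemma EE_const: "EE (\<lambda>X. c) = c"
  using EE_cmult[of c "\<lambda>_. 1"] EE_one by simp
lemma EE_sum: "EE (\<lambda>X. \<Sum>a\<in>A. g a X) = (\<Sum>a\<in>A. EE (g a))"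
  unfolding EE_def by (simp add: sum_distrib_left sum.swap[of _ SS])
lemma EE_mono: "(\<And>X. X \<in> SS \<Longrightarrow> g X \<le> h X) \<Longrightarrow> EE g \<le> EE h"
  unfolding EE_def by (intro sum_mono mult_left_mono w_nonneg) auto

lemma EE_exists:
  assumes "EE g \<le> c" shows "\<exists>X\<in>SS. g X \<le> c"
proof (rule ccontr)
  assume "\<not> ?thesis"
  hence gt: "\<And>X. X \<in> SS \<Longrightarrow> g X > c" by force
  have "(\<Sum>X\<in>SS. w X) = 1" using EE_one unfolding EE_def by simp
  then obtain X0 where X0: "X0 \<in> SS" "w X0 \<noteq> 0"
    by (metis sum.neutral zero_neq_one)
  have "(\<Sum>X\<in>SS. w X * c) < (\<Sum>X\<in>SS. w X * g X)"
  proof (rule sum_strict_mono_ex1[OF finSS])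
    show "\<forall>x\<in>SS. w x * c \<le> w x * g x" using gt w_nonneg by (simp add: less_imp_le mult_left_mono)
    show "\<exists>a\<in>SS. w a * c < w a * g a" using X0 gt w_nonneg
      by (intro bexI[of _ X0]) (auto intro!: mult_strict_left_mono simp: order_le_less)
  qed
  hence "EE (\<lambda>_. c) < EE g" unfolding EE_def .
  thus False using assms EE_const by simp
qed

lemma ff_bound: "x \<in> VV \<Longrightarrow> \<bar>ff X x\<bar> \<le> 1"
  using jr[of x] by (auto simp: ff_def)

lemma EE_ind:
  assumes "P \<subseteq> VV"
  shows "EE (\<lambda>X. of_bool (\<forall>x\<in>P. X x)) = (\<Prod>x\<in>P. j x)"
proof -
  have fP: "finite P" using assms finV finite_subset by blast
  have "EE (\<lambda>X. of_bool (\<forall>x\<in>P. X x)) = EE (\<lambda>X. \<Prod>x\<in>VV. (\<lambda>x t. if x \<in> P then of_bool t else 1) x (X x))"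
  proof -
    have "of_bool (\<forall>x\<in>P. X x) = (\<Prod>x\<in>VV. if x \<in> P then of_bool (X x) else (1::real))" for X
    proof -
      have "(\<Prod>x\<in>VV. if x \<in> P then of_bool (X x) else (1::real)) = (\<Prod>x\<in>VV \<inter> P. of_bool (X x))"
        by (simp add: prod.inter_filter[OF finV, symmetric] Int_def prod.If_cases[OF finV] del: of_bool_eq)
      also have "VV \<inter> P = P" using assms by blast
      also have "(\<Prod>x\<in>P. of_bool (X x)) = (of_bool (\<forall>x\<in>P. X x) :: real)"
        using fP by (induction P rule: finite_induct) auto
      finally show ?thesis by simp
    qed
    thus ?thesis by simp
  qed
  also have "\<dots> = (\<Prod>x\<in>VV. if x \<in> P then j x else 1)"
    using EP[of "\<lambda>x t. if x \<in> P then of_bool t else 1"] by (simp add: if_distrib cong: if_cong)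
  also have "\<dots> = (\<Prod>x\<in>P. j x)"
    using assms by (simp add: prod.If_cases[OF finV] Int_absorb2 Int_commute)
  finally show ?thesis .
qed

lemma EE_single:
  assumes a: "a \<in> VV" and bs: "set bs \<subseteq> VV" "a \<notin> set bs"
  shows "EE (\<lambda>X. ff X a * prod_list (map (ff X) bs)) = 0"
proof -
  define h where "h = (\<lambda>x t. if x = a then of_bool t - j x
      else prod_list (map (\<lambda>y. if y = x then of_bool t - j x else (1::real)) bs))"
  have eq: "(\<Prod>x\<in>VV. h x (X x)) = ff X a * prod_list (map (ff X) bs)" for X
  proof -
    have "(\<Prod>x\<in>VV. h x (X x)) = h a (X a) * (\<Prod>x\<in>VV - {a}. h x (X x))"
      using a finV by (simp add: prod.remove)
    also have "(\<Prod>x\<in>VV - {a}. h x (X x)) = (\<Prod>x\<in>VV - {a}. prod_list (map (\<lambda>y. if y = x then ff X x else 1) bs))"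
      unfolding h_def ff_def by (intro prod.cong) auto
    also have "\<dots> = prod_list (map (ff X) bs)"
      using bs finV by (intro prod_list_delta) auto
    finally show ?thesis by (simp add: h_def ff_def)
  qed
  have "EE (\<lambda>X. ff X a * prod_list (map (ff X) bs)) = EE (\<lambda>X. \<Prod>x\<in>VV. h x (X x))"
    using eq by simp
  also have "\<dots> = (\<Prod>x\<in>VV. j x * h x True + (1 - j x) * h x False)" by (rule EP)
  also have "\<dots> = 0"
    using a finV by (intro prod_zero bexI[of _ a]) (auto simp: h_def algebra_simps)
  finally show ?thesis .
qed


definition NN :: real where "NN = real (card VV)"
lemma NN_ge1: "NN \<ge> 1"
proof -
  have "card VV > 0" using card_V[of p n] p0 by simp
  thus ?thesis unfolding NN_def by simp
qed
lemma NN_pos: "NN > 0" using NN_ge1 by simp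

lemma sum_const_VV: "(\<Sum>x\<in>VV. c) = NN * c"
  by (simp add: NN_def)

lemma sum_bij_delta:
  assumes "bij_betw g VV VV" "x \<in> VV"
  shows "(\<Sum>y\<in>VV. (of_bool (x = g y) :: real)) = 1"
proof -
  have "(\<Sum>y\<in>VV. (of_bool (x = g y) :: real)) = (\<Sum>z\<in>VV. of_bool (x = z))"
    using sum.reindex_bij_betw[OF assms(1), of "\<lambda>z. (of_bool (x = z) :: real)"] by simp
  also have "\<dots> = 1" using assms(2) finV by (simp add: sum.delta)
  finally show ?thesis .
qed

lemma EE_abs_le: "(\<And>X. X \<in> SS \<Longrightarrow> \<bar>g X\<bar> \<le> c) \<Longrightarrow> EE g \<le> c"
  using EE_mono[of g "\<lambda>_. c"] EE_const by (simp add: abs_le_iff)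

definition Sd where "Sd X = (\<Sum>m\<in>VV. ff X m)"

lemma EE_Sd: "EE (\<lambda>X. (Sd X)^2) \<le> NN"
proof -
  have "EE (\<lambda>X. (Sd X)^2) = (\<Sum>m\<in>VV. \<Sum>m'\<in>VV. EE (\<lambda>X. ff X m * ff X m'))"
    unfolding Sd_def power2_eq_square sum_product by (simp add: EE_sum)
  also have "\<dots> \<le> (\<Sum>m\<in>VV. \<Sum>m'\<in>VV. of_bool (m = m'))"
  proof (intro sum_mono)
    fix m m' assume m: "m \<in> VV" and m': "m' \<in> VV"
    show "EE (\<lambda>X. ff X m * ff X m') \<le> of_bool (m = m')"
    proof (cases "m = m'")
      case True
      have "EE (\<lambda>X. ff X m * ff X m') \<le> 1"
        by (rule EE_abs_le, rule abs_mult_le1[OF ff_bound[OF m] ff_bound[OF m']])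
      thus ?thesis using True by simp
    next
      case False
      have "EE (\<lambda>X. ff X m * prod_list (map (ff X) [m'])) = 0"
        using False m m' by (intro EE_single) auto
      thus ?thesis using False by simp
    qed
  qed
  also have "\<dots> = NN" using finV by (simp add: sum.delta sum_const_VV NN_def)
  finally show ?thesis .
qed

definition AA where "AA X u = (\<Sum>m\<in>VV. ff X m * ff X (vadd p m u)) / NN"
definition QQ where "QQ X = (\<Sum>u\<in>VV. (AA X u)^2)"

lemma four_zero:
  assumes u: "u \<in> VV" "u \<noteq> vz" and m: "m \<in> VV" and m': "m' \<in> VV" and ne: "m \<noteq> m'"
  shows "EE (\<lambda>X. ff X m * ff X (vadd p m u) * ff X m' * ff X (vadd p m' u)) = 0"
proof -
  have p: "p > 0" using p0 .
  have mu: "vadd p m u \<in> VV" and m'u: "vadd p m' u \<in> VV" using u m m' p by (auto intro: vadd_V)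
  have ne1: "x \<noteq> vadd p x u" if "x \<in> VV" for x
    using vadd_self_eq[OF p that u(1)] u(2) by metis
  show ?thesis
  proof (cases "m \<in> {vadd p m u, m', vadd p m' u}")
    case False
    hence "EE (\<lambda>X. ff X m * prod_list (map (ff X) [vadd p m u, m', vadd p m' u])) = 0"
      using mu m' m'u m by (intro EE_single) auto
    thus ?thesis by (simp add: mult_ac)
  next
    case True
    hence mm: "m = vadd p m' u" using ne ne1[OF m] by auto
    have uu: "vadd p u u \<noteq> vz" using double_zero[OF pp po u(1)] u(2) by blast
    have "vadd p m u \<noteq> m'"
    proof
      assume "vadd p m u = m'"
      hence "vadd p m' (vadd p u u) = m'" using mm by (simp add: vadd_ac)
      thus False using vadd_self_eq[OF p m' vadd_V[OF p u(1) u(1)]] uu by blast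
    qed
    hence "vadd p m u \<notin> {m, m', vadd p m' u}" using ne1[OF m] mm by auto
    hence "EE (\<lambda>X. ff X (vadd p m u) * prod_list (map (ff X) [m, m', vadd p m' u])) = 0"
      using mu m' m'u m by (intro EE_single) auto
    thus ?thesis by (simp add: mult_ac)
  qed
qed


lemma EE_divide: "EE (\<lambda>X. g X / c) = EE g / c"
  using EE_cmult[of "1/c" g] by simp

lemma EE_AA:
  assumes u: "u \<in> VV"
  shows "EE (\<lambda>X. (AA X u)^2) \<le> of_bool (u = vz) + 1 / NN"
proof (cases "u = vz")
  case True
  have "\<bar>(AA X u)^2\<bar> \<le> 1" for X
  proof -
    have "\<bar>\<Sum>m\<in>VV. ff X m * ff X (vadd p m u)\<bar> \<le> (\<Sum>m\<in>VV. 1)"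
      by (rule order_trans[OF sum_abs sum_mono], rule abs_mult_le1[OF ff_bound ff_bound])
         (auto intro: vadd_V[OF p0] u)
    hence le: "\<bar>\<Sum>m\<in>VV. ff X m * ff X (vadd p m u)\<bar> \<le> NN" by (simp add: NN_def)
    have "\<bar>AA X u\<bar> = \<bar>\<Sum>m\<in>VV. ff X m * ff X (vadd p m u)\<bar> / NN"
      using NN_pos by (simp add: AA_def abs_divide)
    also have "\<dots> \<le> 1" using le NN_pos by (simp add: divide_le_eq_1)
    finally have a1: "\<bar>AA X u\<bar> \<le> 1" .
    show ?thesis unfolding power2_eq_square by (rule abs_mult_le1[OF a1 a1])
  qed
  hence "EE (\<lambda>X. (AA X u)^2) \<le> 1" by (intro EE_abs_le)
  moreover have "0 \<le> 1 / NN" using NN_pos by simp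
  moreover have "of_bool (u = vz) = (1::real)" using True by simp
  ultimately show ?thesis by linarith
next
  case False
  define F where "F X m m' = ff X m * ff X (vadd p m u) * (ff X m' * ff X (vadd p m' u))" for X m m'
  have sq: "(AA X u)^2 = (\<Sum>m\<in>VV. \<Sum>m'\<in>VV. F X m m') / NN^2" for X
    unfolding AA_def F_def power_divide power2_eq_square by (simp add: sum_product)
  have "EE (\<lambda>X. (AA X u)^2) = (\<Sum>m\<in>VV. \<Sum>m'\<in>VV. EE (\<lambda>X. F X m m')) / NN^2"
    unfolding sq EE_divide by (simp add: EE_sum)
  also have "\<dots> \<le> (\<Sum>m\<in>VV. \<Sum>m'\<in>VV. of_bool (m = m')) / NN^2"
  proof (intro divide_right_mono sum_mono)
    fix m m' assume m: "m \<in> VV" and m': "m' \<in> VV"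
    have mu: "vadd p m u \<in> VV" "vadd p m' u \<in> VV" using m m' u by (auto intro: vadd_V[OF p0])
    show "EE (\<lambda>X. F X m m') \<le> of_bool (m = m')"
    proof (cases "m = m'")
      case True
      have "EE (\<lambda>X. F X m m') \<le> 1" unfolding F_def
        by (intro EE_abs_le abs_mult_le1 ff_bound m m' mu)
      thus ?thesis using True by simp
    next
      case ne: False
      have "EE (\<lambda>X. F X m m') = 0" unfolding F_def
        using four_zero[OF u False m m' ne] by (simp add: mult_ac)
      thus ?thesis by simp
    qed
  qed simp
  also have "\<dots> = NN / NN^2" using finV by (simp add: sum.delta sum_const_VV NN_def)
  also have "\<dots> = 1 / NN" using NN_pos by (simp add: power2_eq_square)
  finally show ?thesis using False by simp
qed

lemma EE_QQ: "EE QQ \<le> 2"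
proof -
  have "EE QQ = (\<Sum>u\<in>VV. EE (\<lambda>X. (AA X u)^2))"
    unfolding QQ_def[abs_def] by (simp add: EE_sum)
  also have "\<dots> \<le> (\<Sum>u\<in>VV. of_bool (u = vz) + 1 / NN)"
    by (intro sum_mono EE_AA)
  also have "\<dots> = 2" using finV vz_V[OF p0, of n] NN_pos
    by (auto simp: sum.distrib sum.delta' NN_def)
  finally show ?thesis .
qed


definition PP where "PP m d = {m, vadd p m d, vadd p m (vadd p d d)}"
definition ind :: "(nat \<Rightarrow> nat) set \<Rightarrow> ((nat \<Rightarrow> nat) \<Rightarrow> bool) \<Rightarrow> real"
  where "ind P X = of_bool (\<forall>x\<in>P. X x)"
definition pi where "pi P = (\<Prod>x\<in>P. j x)"
definition TT where "TT X = (\<Sum>m\<in>VV. \<Sum>d\<in>VV. ind (PP m d) X - pi (PP m d))"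

lemma PP_sub: "m \<in> VV \<Longrightarrow> d \<in> VV \<Longrightarrow> PP m d \<subseteq> VV"
  unfolding PP_def by (auto intro!: vadd_V[OF p0])

lemma pi_01: "P \<subseteq> VV \<Longrightarrow> 0 \<le> pi P \<and> pi P \<le> 1"
  unfolding pi_def using jr by (auto intro!: prod_nonneg prod_le_1)

lemma cov:
  assumes A: "A \<subseteq> VV" and B: "B \<subseteq> VV"
  shows "EE (\<lambda>X. (ind A X - pi A) * (ind B X - pi B)) \<le> of_bool (A \<inter> B \<noteq> {})"
proof -
  have fA: "finite A" and fB: "finite B" using A B finV finite_subset by auto
  have iu: "ind A X * ind B X = ind (A \<union> B) X" for X by (auto simp: ind_def)
  have e: "(ind A X - pi A) * (ind B X - pi B) = ind (A \<union> B) X - pi B * ind A X - pi A * ind B X + pi A * pi B" for X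
    by (simp add: algebra_simps iu[symmetric])
  have "EE (\<lambda>X. (ind A X - pi A) * (ind B X - pi B)) = pi (A \<union> B) - pi A * pi B"
    unfolding e using A B
    by (simp add: EE_add EE_diff EE_cmult EE_const EE_ind[unfolded ind_def[symmetric]] pi_def[symmetric])
  also have "\<dots> \<le> of_bool (A \<inter> B \<noteq> {})"
  proof (cases "A \<inter> B = {}")
    case True
    thus ?thesis unfolding pi_def using fA fB by (simp add: prod.union_disjoint)
  next
    case False
    have "pi (A \<union> B) \<le> 1" "0 \<le> pi A * pi B" using pi_01[of "A \<union> B"] pi_01[OF A] pi_01[OF B] A B by auto
    thus ?thesis using False by simp
  qed
  finally show ?thesis .
qed

lemma count_PP:
  assumes x: "x \<in> VV"
  shows "(\<Sum>m\<in>VV. \<Sum>d\<in>VV. (of_bool (x \<in> PP m d) :: real)) \<le> 3 * NN"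
proof -
  have "(\<Sum>m\<in>VV. \<Sum>d\<in>VV. (of_bool (x \<in> PP m d) :: real)) \<le>
     (\<Sum>m\<in>VV. \<Sum>d\<in>VV. of_bool (x = m) + of_bool (x = vadd p m d) + of_bool (x = vadd p m (vadd p d d)))"
    by (intro sum_mono) (auto simp: PP_def)
  also have "\<dots> = (\<Sum>m\<in>VV. \<Sum>d\<in>VV. of_bool (x = m)) + (\<Sum>m\<in>VV. \<Sum>d\<in>VV. of_bool (x = vadd p m d))
       + (\<Sum>m\<in>VV. \<Sum>d\<in>VV. of_bool (x = vadd p m (vadd p d d)))"
    by (simp add: sum.distrib)
  also have "(\<Sum>m\<in>VV. \<Sum>d\<in>VV. (of_bool (x = m) :: real)) = NN"
    using x finV by (simp add: NN_def sum.delta)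
  also have "(\<Sum>m\<in>VV. \<Sum>d\<in>VV. (of_bool (x = vadd p m d) :: real)) = NN"
    using x by (simp add: sum_bij_delta[OF vadd_bij'[OF p0] x] NN_def)
  also have "(\<Sum>m\<in>VV. \<Sum>d\<in>VV. (of_bool (x = vadd p m (vadd p d d)) :: real)) = NN"
    using x by (simp add: sum_bij_delta[OF double_bij[OF pp po] x] NN_def)
  finally show ?thesis by simp
qed

lemma inter3: "(of_bool ({a, b, c} \<inter> B \<noteq> {}) :: real) \<le> of_bool (a \<in> B) + of_bool (b \<in> B) + of_bool (c \<in> B)"
  by auto

lemma count_inter:
  assumes m: "m \<in> VV" and d: "d \<in> VV"
  shows "(\<Sum>m'\<in>VV. \<Sum>d'\<in>VV. (of_bool (PP m d \<inter> PP m' d' \<noteq> {}) :: real)) \<le> 9 * NN"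
proof -
  have md: "vadd p m d \<in> VV" "vadd p m (vadd p d d) \<in> VV" using m d by (auto intro!: vadd_V[OF p0])
  have "(\<Sum>m'\<in>VV. \<Sum>d'\<in>VV. (of_bool (PP m d \<inter> PP m' d' \<noteq> {}) :: real)) \<le>
     (\<Sum>m'\<in>VV. \<Sum>d'\<in>VV. of_bool (m \<in> PP m' d') + of_bool (vadd p m d \<in> PP m' d') + of_bool (vadd p m (vadd p d d) \<in> PP m' d'))"
    unfolding PP_def[of m d] by (intro sum_mono inter3)
  also have "\<dots> = (\<Sum>m'\<in>VV. \<Sum>d'\<in>VV. of_bool (m \<in> PP m' d')) + (\<Sum>m'\<in>VV. \<Sum>d'\<in>VV. of_bool (vadd p m d \<in> PP m' d'))
     + (\<Sum>m'\<in>VV. \<Sum>d'\<in>VV. of_bool (vadd p m (vadd p d d) \<in> PP m' d'))"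
    by (simp add: sum.distrib)
  also have "\<dots> \<le> 3 * NN + 3 * NN + 3 * NN"
    by (intro add_mono count_PP m md)
  finally show ?thesis by simp
qed

lemma EE_TT: "EE (\<lambda>X. (TT X)^2) \<le> 9 * NN^3"
proof -
  have "EE (\<lambda>X. (TT X)^2) = (\<Sum>m\<in>VV. \<Sum>d\<in>VV. \<Sum>m'\<in>VV. \<Sum>d'\<in>VV.
      EE (\<lambda>X. (ind (PP m' d') X - pi (PP m' d')) * (ind (PP m d) X - pi (PP m d))))"
  proof -
    have "(TT X)^2 = (\<Sum>m\<in>VV. \<Sum>d\<in>VV. \<Sum>m'\<in>VV. \<Sum>d'\<in>VV.
      (ind (PP m' d') X - pi (PP m' d')) * (ind (PP m d) X - pi (PP m d)))" for X
      unfolding TT_def power2_eq_square by (simp only: sum_distrib_left sum_distrib_right)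
    thus ?thesis by (simp only: EE_sum)
  qed
  also have "\<dots> \<le> (\<Sum>m\<in>VV. \<Sum>d\<in>VV. \<Sum>m'\<in>VV. \<Sum>d'\<in>VV. of_bool (PP m' d' \<inter> PP m d \<noteq> {}))"
    by (intro sum_mono cov PP_sub)
  also have "\<dots> \<le> (\<Sum>m\<in>VV. \<Sum>d\<in>VV. 9 * NN)"
    by (rule sum_mono, rule sum_mono, subst Int_commute, rule count_inter)
  also have "\<dots> = 9 * NN^3" by (simp add: NN_def power3_eq_cube)
  finally show ?thesis .
qed


lemma pi_diff:
  assumes m: "m \<in> VV" and d: "d \<in> VV"
  shows "\<bar>pi (PP m d) - j m * j (vadd p m d) * j (vadd p m (vadd p d d))\<bar> \<le> of_bool (d = vz)"
proof (cases "d = vz")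
  case True
  have "vadd p m vz = m" "vadd p vz vz = vz" using m vz_V[OF p0] vadd_vz[OF p0] by auto
  hence "PP m d = {m}" using True by (simp add: PP_def)
  hence eq: "pi (PP m d) - j m * j (vadd p m d) * j (vadd p m (vadd p d d)) = j m - j m * j m * j m"
    using True \<open>vadd p m vz = m\<close> \<open>vadd p vz vz = vz\<close> by (simp add: pi_def)
  have c0: "0 \<le> j m * j m * j m" using jr[OF m] by simp
  have c1: "j m * j m * j m \<le> j m"
  proof -
    have a: "j m * j m \<le> 1" using jr[OF m] by (auto intro: mult_le_one)
    have "j m * (j m * j m) \<le> j m * 1" by (rule mult_left_mono[OF a]) (use jr[OF m] in simp)
    thus ?thesis by (simp add: mult.assoc)
  qed
  have x0: "0 \<le> j m - j m * j m * j m" using c1 by linarith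
  have x1: "j m - j m * j m * j m \<le> 1" using c0 jr[OF m] by linarith
  show ?thesis unfolding eq abs_of_nonneg[OF x0] using x1 True by simp
next
  case False
  have p: "p > 0" using p0 .
  have md: "vadd p m d \<in> VV" and dd: "vadd p d d \<in> VV" using m d by (auto intro: vadd_V[OF p])
  have n1: "m \<noteq> vadd p m d" using vadd_self_eq[OF p m d] False by metis
  have n2: "vadd p m d \<noteq> vadd p m (vadd p d d)"
  proof
    assume "vadd p m d = vadd p m (vadd p d d)"
    hence "vadd p (vadd p m d) d = vadd p m d" by (simp add: vadd_ac)
    thus False using vadd_self_eq[OF p md d] False by metis
  qed
  have n3: "m \<noteq> vadd p m (vadd p d d)"
  proof
    assume "m = vadd p m (vadd p d d)"
    hence "vadd p d d = vz" using vadd_self_eq[OF p m dd] by metis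
    thus False using double_zero[OF pp po d] False by blast
  qed
  have "pi (PP m d) = j m * j (vadd p m d) * j (vadd p m (vadd p d d))"
    unfolding pi_def PP_def using n1 n2 n3 by simp
  thus ?thesis by simp
qed

lemma NN2: "real p ^ (2 * n) = NN^2"
  unfolding NN_def card_V by (simp add: power_mult[symmetric] mult.commute)

lemma L3_ind: "Lambda3 p n (\<lambda>m. of_bool (X m)) = (\<Sum>m\<in>VV. \<Sum>d\<in>VV. ind (PP m d) X) / NN^2"
proof -
  have e: "of_bool (X m) * of_bool (X (vadd p m d)) * of_bool (X (vadd p m (vadd p d d))) = ind (PP m d) X" for m d
    by (simp add: ind_def PP_def)
  show ?thesis unfolding Lambda3_def NN2 e ..
qed

lemma L3_close:
  "\<bar>Lambda3 p n (\<lambda>m. of_bool (X m)) - Lambda3 p n j\<bar> \<le> (\<bar>TT X\<bar> + NN) / NN^2"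
proof -
  define D where "D = (\<Sum>m\<in>VV. \<Sum>d\<in>VV. pi (PP m d) - j m * j (vadd p m d) * j (vadd p m (vadd p d d)))"
  have L3j: "Lambda3 p n j = (\<Sum>m\<in>VV. \<Sum>d\<in>VV. j m * j (vadd p m d) * j (vadd p m (vadd p d d))) / NN^2"
    unfolding Lambda3_def NN2 ..
  have eq: "Lambda3 p n (\<lambda>m. of_bool (X m)) - Lambda3 p n j = (TT X + D) / NN^2"
    unfolding L3_ind L3j TT_def D_def by (simp add: diff_divide_distrib sum_subtractf)
  have "\<bar>D\<bar> \<le> (\<Sum>m\<in>VV. \<Sum>d\<in>VV. of_bool (d = vz))"
    unfolding D_def by (rule order_trans[OF sum_abs sum_mono], rule order_trans[OF sum_abs sum_mono], rule pi_diff)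
  also have "\<dots> = NN" using finV vz_V[OF p0, of n] by (simp add: NN_def sum.delta')
  finally have "\<bar>D\<bar> \<le> NN" .
  hence "\<bar>TT X + D\<bar> \<le> \<bar>TT X\<bar> + NN" by linarith
  thus ?thesis unfolding eq using NN_pos by (simp add: abs_divide divide_right_mono)
qed

lemma choose_X: "\<exists>X\<in>SS. QQ X \<le> 6 \<and> (TT X)^2 \<le> 27 * NN^3 \<and> (Sd X)^2 \<le> 3 * NN"
proof -
  define G where "G X = QQ X / 2 + (TT X)^2 / (9 * NN^3) + (Sd X)^2 / NN" for X
  have "EE G = EE QQ / 2 + EE (\<lambda>X. (TT X)^2) / (9 * NN^3) + EE (\<lambda>X. (Sd X)^2) / NN"
    unfolding G_def by (simp add: EE_add EE_divide)
  also have "\<dots> \<le> 2 / 2 + (9 * NN^3) / (9 * NN^3) + NN / NN"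
    using EE_QQ EE_TT EE_Sd NN_pos by (intro add_mono divide_right_mono) auto
  also have "\<dots> = 3" using NN_pos by simp
  finally obtain X where X: "X \<in> SS" "G X \<le> 3" using EE_exists by blast
  have q0: "QQ X \<ge> 0" unfolding QQ_def by (simp add: sum_nonneg)
  have t0: "(TT X)^2 / (9 * NN^3) \<ge> 0" and s0: "(Sd X)^2 / NN \<ge> 0" using NN_pos by auto
  have "QQ X \<le> 6" using X(2) t0 s0 unfolding G_def by linarith
  moreover have "(TT X)^2 / (9 * NN^3) \<le> 3" using X(2) q0 s0 unfolding G_def by linarith
  hence "(TT X)^2 \<le> 27 * NN^3" using NN_pos by (simp add: divide_le_eq)
  moreover have "(Sd X)^2 / NN \<le> 3" using X(2) q0 t0 unfolding G_def by linarith
  hence "(Sd X)^2 \<le> 3 * NN" using NN_pos by (simp add: divide_le_eq)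
  ultimately show ?thesis using X(1) by blast
qed

end

lemma sub_facts:
  assumes "p > 0" "is_subspace p n W"
  shows "W \<subseteq> V p n" "vz \<in> W" "\<And>x y. x \<in> W \<Longrightarrow> y \<in> W \<Longrightarrow> vadd p x y \<in> W"
    "\<And>x. x \<in> W \<Longrightarrow> vneg p x \<in> W"
  using assms unfolding is_subspace_def vz_def vneg_def by (auto simp: diff_less)

lemma sub_fin: "p > 0 \<Longrightarrow> is_subspace p n W \<Longrightarrow> finite W \<and> card W > 0"
  using sub_facts[of p n W] finite_V[of p n] by (metis card_gt_0_iff empty_iff finite_subset)

lemma sub_bij:
  assumes p: "p > 0" and W: "is_subspace p n W" and a: "a \<in> W"
  shows "bij_betw (\<lambda>w. vadd p a w) W W"
proof (rule bij_betw_byWitness[where f' = "\<lambda>w. vadd p (vneg p a) w"])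
  note F = sub_facts[OF p W]
  have aV: "a \<in> V p n" using F(1) a by blast
  show "\<forall>x\<in>W. vadd p (vneg p a) (vadd p a x) = x"
    using F(1) p by (auto simp: vadd_assoc[symmetric] vadd_comm[of p "vneg p a" a] vadd_vneg vadd_comm[of p vz] vadd_vz)
  show "\<forall>y\<in>W. vadd p a (vadd p (vneg p a) y) = y"
    using F(1) p by (auto simp: vadd_assoc[symmetric] vadd_vneg vadd_comm[of p vz] vadd_vz)
  show "(\<lambda>w. vadd p a w) ` W \<subseteq> W" using F(3) a by auto
  show "(\<lambda>w. vadd p (vneg p a) w) ` W \<subseteq> W" using F(3) F(4) a by auto
qed

lemma avg4:
  fixes f :: "(nat \<Rightarrow> nat) \<Rightarrow> real"
  assumes p: "p > 0" and W: "is_subspace p n W" and m0: "m0 \<in> V p n"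
  shows "(avgW p W f m0)^4 \<le> real (card (V p n))^2 *
     (\<Sum>u\<in>V p n. ((\<Sum>m\<in>V p n. f m * f (vadd p m u)) / real (card (V p n)))^2) / real (card W)^3"
proof -
  note F = sub_facts[OF p W]
  define K where "K = real (card W)"
  define N where "N = real (card (V p n))"
  define A where "A u = (\<Sum>m\<in>V p n. f m * f (vadd p m u)) / N" for u
  define Q where "Q = (\<Sum>u\<in>V p n. (A u)^2)"
  define s where "s m = (\<Sum>w\<in>W. f (vadd p m w))" for m
  have finW: "finite W" and K0: "K > 0" using sub_fin[OF p W] by (auto simp: K_def)
  have finV: "finite (V p n)" using finite_V[OF p] .
  have N0: "N > 0" using card_V[of p n] p by (simp add: N_def)
  have WV: "\<And>w. w \<in> W \<Longrightarrow> w \<in> V p n" using F(1) by blast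
  have sa: "s (vadd p m w0) = s m" if w0: "w0 \<in> W" for m w0
  proof -
    have "s (vadd p m w0) = (\<Sum>w\<in>W. f (vadd p m (vadd p w0 w)))" by (simp add: s_def vadd_assoc)
    also have "\<dots> = s m" unfolding s_def by (rule sum.reindex_bij_betw[OF sub_bij[OF p W w0]])
    finally show ?thesis .
  qed
  have sb: "K * (s m0)^2 \<le> (\<Sum>m\<in>V p n. (s m)^2)"
  proof -
    have inj: "inj_on (\<lambda>w. vadd p m0 w) W"
      by (rule inj_onI) (metis WV p vadd_cancel vadd_comm)
    have sub: "(\<lambda>w. vadd p m0 w) ` W \<subseteq> V p n" using WV m0 p vadd_V by blast
    have "(\<Sum>w\<in>W. (s (vadd p m0 w))^2) = (\<Sum>w\<in>W. (s m0)^2)"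
      by (rule sum.cong) (auto simp: sa)
    hence "K * (s m0)^2 = (\<Sum>w\<in>W. (s (vadd p m0 w))^2)"
      by (simp add: K_def)
    also have "\<dots> = (\<Sum>m\<in>(\<lambda>w. vadd p m0 w) ` W. (s m)^2)"
      by (simp add: sum.reindex[OF inj])
    also have "\<dots> \<le> (\<Sum>m\<in>V p n. (s m)^2)"
      by (rule sum_mono2[OF finV sub]) auto
    finally show ?thesis .
  qed
  have shift: "(\<Sum>m\<in>V p n. f (vadd p m w) * f (vadd p m w')) = N * A (vadd p w' (vneg p w))"
    if w: "w \<in> W" and w': "w' \<in> W" for w w'
  proof -
    have wV: "w \<in> V p n" "w' \<in> V p n" using w w' WV by auto
    have "(\<Sum>m\<in>V p n. f m * f (vadd p m (vadd p w' (vneg p w)))) =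
          (\<Sum>m\<in>V p n. f (vadd p m w) * f (vadd p (vadd p m w) (vadd p w' (vneg p w))))"
      by (rule sum.reindex_bij_betw[OF vadd_bij[OF p wV(1)], symmetric])
    also have "\<dots> = (\<Sum>m\<in>V p n. f (vadd p m w) * f (vadd p m w'))"
    proof (rule sum.cong[OF refl])
      fix m assume m: "m \<in> V p n"
      have "vadd p (vadd p m w) (vadd p w' (vneg p w)) = vadd p (vadd p m w') (vadd p w (vneg p w))"
        by (simp only: vadd_ac)
      also have "\<dots> = vadd p m w'" using vadd_vz[OF p vadd_V[OF p m wV(2)]] p by (simp add: vadd_vneg)
      finally show "f (vadd p m w) * f (vadd p (vadd p m w) (vadd p w' (vneg p w))) = f (vadd p m w) * f (vadd p m w')"
        by simp
    qed
    finally show ?thesis using N0 by (simp add: A_def)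
  qed
  have sc: "(\<Sum>m\<in>V p n. (s m)^2) = K * N * (\<Sum>u\<in>W. A u)"
  proof -
    have "(\<Sum>m\<in>V p n. (s m)^2) = (\<Sum>m\<in>V p n. \<Sum>w\<in>W. \<Sum>w'\<in>W. f (vadd p m w) * f (vadd p m w'))"
      unfolding s_def power2_eq_square by (simp only: sum_product)
    also have "\<dots> = (\<Sum>w\<in>W. \<Sum>w'\<in>W. \<Sum>m\<in>V p n. f (vadd p m w) * f (vadd p m w'))"
      by (rule trans[OF sum.swap], rule sum.cong[OF refl], rule sum.swap)
    also have "\<dots> = (\<Sum>w\<in>W. \<Sum>w'\<in>W. N * A (vadd p w' (vneg p w)))"
      by (intro sum.cong refl shift)
    also have "\<dots> = (\<Sum>w\<in>W. N * (\<Sum>u\<in>W. A u))"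
    proof (rule sum.cong[OF refl])
      fix w assume w: "w \<in> W"
      have bij: "bij_betw (\<lambda>w'. vadd p w' (vneg p w)) W W"
        using sub_bij[OF p W F(4)[OF w]] by (simp add: vadd_comm)
      show "(\<Sum>w'\<in>W. N * A (vadd p w' (vneg p w))) = N * (\<Sum>u\<in>W. A u)"
        by (simp add: sum_distrib_left[symmetric] sum.reindex_bij_betw[OF bij])
    qed
    also have "\<dots> = K * N * (\<Sum>u\<in>W. A u)" by (simp add: K_def)
    finally show ?thesis .
  qed
  have sd: "(\<Sum>u\<in>W. A u)^2 \<le> Q * K"
  proof -
    have "(\<Sum>u\<in>W. A u)^2 \<le> (\<Sum>u\<in>W. (A u)^2) * K"
      unfolding K_def by (rule sum_squared_le_sum_of_squares)
    also have "(\<Sum>u\<in>W. (A u)^2) \<le> Q" unfolding Q_def by (rule sum_mono2[OF finV F(1)]) auto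
    hence "(\<Sum>u\<in>W. (A u)^2) * K \<le> Q * K" using K0 by (simp add: mult_right_mono)
    finally show ?thesis .
  qed
  define Y where "Y = (\<Sum>u\<in>W. A u)"
  have s2: "(s m0)^2 \<le> N * Y" using sb sc K0 unfolding Y_def
    by (metis mult.assoc mult_le_cancel_left_pos)
  have "(s m0)^4 = ((s m0)^2)^2" by simp
  also have "\<dots> \<le> (N * Y)^2" by (rule power_mono[OF s2]) simp
  also have "\<dots> = N^2 * Y^2" by (simp add: power_mult_distrib)
  also have "\<dots> \<le> N^2 * (Q * K)" using sd unfolding Y_def by (simp add: mult_left_mono)
  finally have s4: "(s m0)^4 \<le> N^2 * Q * K" by simp
  have "(avgW p W f m0)^4 = (s m0)^4 / K^4" by (simp add: avgW_def s_def K_def power_divide)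
  also have "\<dots> \<le> N^2 * Q * K / K^4" by (rule divide_right_mono[OF s4]) simp
  also have "\<dots> = N^2 * Q / K^3" using K0 by (simp add: power_eq_if)
  finally show ?thesis by (simp add: N_def Q_def A_def K_def)
qed


lemma avg_pert:
  fixes g h :: "(nat \<Rightarrow> nat) \<Rightarrow> real"
  assumes p: "p > 0" and W: "is_subspace p n W" and m: "m \<in> V p n"
  shows "\<bar>avgW p W g m - avgW p W h m\<bar> \<le> (\<Sum>x\<in>V p n. \<bar>g x - h x\<bar>) / real (card W)"
proof -
  note F = sub_facts[OF p W]
  have K0: "card W > 0" using sub_fin[OF p W] by auto
  have inj: "inj_on (\<lambda>w. vadd p m w) W"
    by (rule inj_onI) (metis F(1) subsetD p vadd_cancel vadd_comm)
  have sub: "(\<lambda>w. vadd p m w) ` W \<subseteq> V p n" using F(1) m p vadd_V by blast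
  have "avgW p W g m - avgW p W h m = (\<Sum>w\<in>W. g (vadd p m w) - h (vadd p m w)) / real (card W)"
    by (simp add: avgW_def diff_divide_distrib sum_subtractf)
  hence "\<bar>avgW p W g m - avgW p W h m\<bar> = \<bar>\<Sum>w\<in>W. g (vadd p m w) - h (vadd p m w)\<bar> / real (card W)"
    by (simp add: abs_divide)
  also have "\<dots> \<le> (\<Sum>w\<in>W. \<bar>g (vadd p m w) - h (vadd p m w)\<bar>) / real (card W)"
    by (intro divide_right_mono sum_abs) simp
  also have "(\<Sum>w\<in>W. \<bar>g (vadd p m w) - h (vadd p m w)\<bar>) = (\<Sum>x\<in>(\<lambda>w. vadd p m w) ` W. \<bar>g x - h x\<bar>)"
    by (simp add: sum.reindex[OF inj])
  also have "\<dots> \<le> (\<Sum>x\<in>V p n. \<bar>g x - h x\<bar>)"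
    by (rule sum_mono2[OF finite_V[OF p] sub]) auto
  finally show ?thesis by (simp add: divide_right_mono)
qed

lemma prod3_diff:
  fixes a b c a' b' c' :: real
  assumes "\<bar>b\<bar> \<le> 1" "\<bar>c\<bar> \<le> 1" "\<bar>a'\<bar> \<le> 1" "\<bar>b'\<bar> \<le> 1"
  shows "\<bar>a * b * c - a' * b' * c'\<bar> \<le> \<bar>a - a'\<bar> + \<bar>b - b'\<bar> + \<bar>c - c'\<bar>"
proof -
  have e: "a * b * c - a' * b' * c' = (a - a') * (b * c) + (b - b') * (a' * c) + (c - c') * (a' * b')"
    by (simp add: algebra_simps)
  have t: "\<bar>x * y\<bar> \<le> \<bar>x\<bar>" if "\<bar>y\<bar> \<le> 1" for x y :: real
    using that by (simp add: abs_mult mult_left_le)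
  have "\<bar>(a - a') * (b * c)\<bar> \<le> \<bar>a - a'\<bar>" by (rule t, rule abs_mult_le1) (use assms in auto)
  moreover have "\<bar>(b - b') * (a' * c)\<bar> \<le> \<bar>b - b'\<bar>" by (rule t, rule abs_mult_le1) (use assms in auto)
  moreover have "\<bar>(c - c') * (a' * b')\<bar> \<le> \<bar>c - c'\<bar>" by (rule t, rule abs_mult_le1) (use assms in auto)
  ultimately show ?thesis unfolding e by (smt (verit) abs_triangle_ineq)
qed

lemma L3_pert:
  fixes g h :: "(nat \<Rightarrow> nat) \<Rightarrow> real"
  assumes pp: "prime p" "odd p"
    and g: "\<And>x. x \<in> V p n \<Longrightarrow> \<bar>g x\<bar> \<le> 1" and h: "\<And>x. x \<in> V p n \<Longrightarrow> \<bar>h x\<bar> \<le> 1"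
  shows "\<bar>Lambda3 p n g - Lambda3 p n h\<bar> \<le> 3 * (\<Sum>x\<in>V p n. \<bar>g x - h x\<bar>) / real (card (V p n))"
proof -
  have p: "p > 0" using pp prime_gt_0_nat by blast
  define N where "N = real (card (V p n))"
  define D where "D = (\<Sum>x\<in>V p n. \<bar>g x - h x\<bar>)"
  have N0: "N > 0" using card_V[of p n] p by (simp add: N_def)
  have N2: "real p ^ (2 * n) = N^2" unfolding N_def card_V by (simp add: power_mult[symmetric] mult.commute)
  have "Lambda3 p n g - Lambda3 p n h = (\<Sum>m\<in>V p n. \<Sum>d\<in>V p n.
     g m * g (vadd p m d) * g (vadd p m (vadd p d d)) - h m * h (vadd p m d) * h (vadd p m (vadd p d d))) / N^2"
    unfolding Lambda3_def N2 by (simp add: diff_divide_distrib sum_subtractf)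
  hence "\<bar>Lambda3 p n g - Lambda3 p n h\<bar> = \<bar>\<Sum>m\<in>V p n. \<Sum>d\<in>V p n.
     g m * g (vadd p m d) * g (vadd p m (vadd p d d)) - h m * h (vadd p m d) * h (vadd p m (vadd p d d))\<bar> / N^2"
    by (simp add: abs_divide)
  also have "\<dots> \<le> (\<Sum>m\<in>V p n. \<Sum>d\<in>V p n. \<bar>g m - h m\<bar> + \<bar>g (vadd p m d) - h (vadd p m d)\<bar>
        + \<bar>g (vadd p m (vadd p d d)) - h (vadd p m (vadd p d d))\<bar>) / N^2"
  proof (intro divide_right_mono)
    show "0 \<le> N^2" by simp
    show "\<bar>\<Sum>m\<in>V p n. \<Sum>d\<in>V p n.
     g m * g (vadd p m d) * g (vadd p m (vadd p d d)) - h m * h (vadd p m d) * h (vadd p m (vadd p d d))\<bar>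
      \<le> (\<Sum>m\<in>V p n. \<Sum>d\<in>V p n. \<bar>g m - h m\<bar> + \<bar>g (vadd p m d) - h (vadd p m d)\<bar>
        + \<bar>g (vadd p m (vadd p d d)) - h (vadd p m (vadd p d d))\<bar>)"
      by (rule order_trans[OF sum_abs sum_mono], rule order_trans[OF sum_abs sum_mono], rule prod3_diff)
         (auto intro!: g h vadd_V[OF p])
  qed
  also have "(\<Sum>m\<in>V p n. \<Sum>d\<in>V p n. \<bar>g m - h m\<bar> + \<bar>g (vadd p m d) - h (vadd p m d)\<bar>
        + \<bar>g (vadd p m (vadd p d d)) - h (vadd p m (vadd p d d))\<bar>) = 3 * N * D"
  proof -
    have "(\<Sum>m\<in>V p n. \<Sum>d\<in>V p n. \<bar>g m - h m\<bar> + \<bar>g (vadd p m d) - h (vadd p m d)\<bar>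
        + \<bar>g (vadd p m (vadd p d d)) - h (vadd p m (vadd p d d))\<bar>)
      = (\<Sum>m\<in>V p n. (\<Sum>d\<in>V p n. \<bar>g m - h m\<bar>) + (\<Sum>d\<in>V p n. \<bar>g (vadd p m d) - h (vadd p m d)\<bar>)
        + (\<Sum>d\<in>V p n. \<bar>g (vadd p m (vadd p d d)) - h (vadd p m (vadd p d d))\<bar>))"
      by (simp add: sum.distrib)
    also have "\<dots> = (\<Sum>m\<in>V p n. N * \<bar>g m - h m\<bar> + D + D)"
    proof (rule sum.cong[OF refl])
      fix m assume m: "m \<in> V p n"
      have "(\<Sum>d\<in>V p n. \<bar>g (vadd p m d) - h (vadd p m d)\<bar>) = D"
        unfolding D_def by (rule sum.reindex_bij_betw[OF vadd_bij'[OF p m]])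
      moreover have "(\<Sum>d\<in>V p n. \<bar>g (vadd p m (vadd p d d)) - h (vadd p m (vadd p d d))\<bar>) = D"
        unfolding D_def by (rule sum.reindex_bij_betw[OF double_bij[OF pp m]])
      ultimately show "(\<Sum>d\<in>V p n. \<bar>g m - h m\<bar>) + (\<Sum>d\<in>V p n. \<bar>g (vadd p m d) - h (vadd p m d)\<bar>)
        + (\<Sum>d\<in>V p n. \<bar>g (vadd p m (vadd p d d)) - h (vadd p m (vadd p d d))\<bar>) = N * \<bar>g m - h m\<bar> + D + D"
        by (simp add: N_def)
    qed
    also have "\<dots> = 3 * N * D" by (simp add: sum.distrib sum_distrib_left[symmetric] D_def N_def)
    finally show ?thesis .
  qed
  also have "3 * N * D / N^2 = 3 * D / N" using N0 by (simp add: power2_eq_square)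
  finally show ?thesis by (simp add: D_def N_def)
qed


lemma exp_nonpos: "real n \<ge> 36 \<Longrightarrow> 3 * sqrt (real n) - real n / 2 \<le> 0"
proof -
  assume n: "real n \<ge> 36"
  have s6: "sqrt (real n) \<ge> 6" using real_sqrt_le_mono[OF n] by simp
  have "6 * sqrt (real n) \<le> sqrt (real n) * sqrt (real n)"
    by (rule mult_right_mono[OF s6]) simp
  hence "real n \<ge> 6 * sqrt (real n)" by simp
  thus ?thesis by linarith
qed

lemma numeric1:
  fixes x K :: real and n :: nat
  assumes x: "x \<ge> 3" and n: "real n \<ge> 36" and K: "K \<ge> x powr (real n - sqrt (real n))"
  shows "(x powr real n)^2 / K^3 \<le> 3 powr (3 * sqrt (real n) - real n / 2)"
    and "x powr (real n / 2) / K \<le> 3 powr (3 * sqrt (real n) - real n / 2)"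
proof -
  have x0: "x > 0" using x by simp
  have x1: "x \<ge> 1" using x by simp
  have Kp: "0 < x powr (real n - sqrt (real n))" using x0 by simp
  have e0: "3 * sqrt (real n) - real n / 2 \<le> 0" by (rule exp_nonpos[OF n])
  have K0: "K > 0" using K Kp by linarith
  have s0: "sqrt (real n) \<ge> 0" by simp
  have "(x powr real n)^2 / K^3 \<le> (x powr real n)^2 / (x powr (real n - sqrt (real n)))^3"
    by (rule divide_left_mono) (use K Kp in \<open>auto intro!: power_mono mult_pos_pos simp del: powr_gt_zero\<close>)
  also have "\<dots> = x powr (2 * real n) / x powr (3 * (real n - sqrt (real n)))"
    using x0 by (simp add: powr_power)
  also have "\<dots> = x powr (3 * sqrt (real n) - real n)"
    by (simp add: powr_diff[symmetric] algebra_simps)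
  also have "\<dots> \<le> x powr (3 * sqrt (real n) - real n / 2)"
    by (rule powr_mono[OF _ x1]) simp
  also have "\<dots> \<le> 3 powr (3 * sqrt (real n) - real n / 2)"
    by (rule powr_mono2'[OF e0]) (use x in auto)
  finally show "(x powr real n)^2 / K^3 \<le> 3 powr (3 * sqrt (real n) - real n / 2)" .
  have "x powr (real n / 2) / K \<le> x powr (real n / 2) / x powr (real n - sqrt (real n))"
    by (rule divide_left_mono) (use K Kp K0 in \<open>auto intro!: mult_pos_pos simp del: powr_gt_zero\<close>)
  also have "\<dots> = x powr (sqrt (real n) - real n / 2)"
    by (simp add: powr_diff[symmetric] algebra_simps)
  also have "\<dots> \<le> x powr (3 * sqrt (real n) - real n / 2)"
    by (rule powr_mono[OF _ x1]) (use s0 in simp)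
  also have "\<dots> \<le> 3 powr (3 * sqrt (real n) - real n / 2)"
    by (rule powr_mono2'[OF e0]) (use x in auto)
  finally show "x powr (real n / 2) / K \<le> 3 powr (3 * sqrt (real n) - real n / 2)" .
qed

lemma card_lower:
  assumes p: "p \<ge> 3" and W: "is_subspace p n W" and c: "codim p n W \<le> sqrt (real n)"
  shows "real (card W) \<ge> real p powr (real n - sqrt (real n))"
proof -
  have K0: "card W > 0" using sub_fin[OF _ W] p by auto
  have "log (real p) (real (card W)) \<ge> real n - sqrt (real n)" using c by (simp add: codim_def)
  hence "real p powr (real n - sqrt (real n)) \<le> real p powr (log (real p) (real (card W)))"
    by (rule powr_mono) (use p in simp)
  also have "\<dots> = real (card W)" using p K0 by (simp add: powr_log_cancel)
  finally show ?thesis .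
qed


context rr
begin

lemma main_n:
  assumes n36: "real n \<ge> 36"
    and small: "real n ^ 4 * 3 powr (3 * sqrt (real n) - real n / 2) \<le> 1"
  shows "\<exists>j2 :: (nat \<Rightarrow> nat) \<Rightarrow> real.
       (\<forall>m\<in>V p n. j2 m = 0 \<or> j2 m = 1) \<and>
       Ex p n j2 \<ge> Ex p n j \<and>
       \<bar>Lambda3 p n j2 - Lambda3 p n j\<bar> \<le> 16 * real p powr (- real n / 3) \<and>
       (\<forall>W. is_subspace p n W \<and> codim p n W \<le> sqrt (real n) \<longrightarrow>
          (\<forall>m\<in>V p n. \<bar>avgW p W j2 m - avgW p W j m\<bar> \<le> 16 / real n))"
proof -
  have p3: "p \<ge> 3"
  proof -
    have "p \<ge> 2" using pp prime_ge_2_nat by blast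
    moreover have "p \<noteq> 2" using po by auto
    ultimately show ?thesis by simp
  qed
  have rp3: "real p \<ge> 3" using p3 by simp
  obtain X where X: "X \<in> SS" "QQ X \<le> 6" "(TT X)^2 \<le> 27 * NN^3" "(Sd X)^2 \<le> 3 * NN"
    using choose_X by blast
  define j2 where "j2 = (\<lambda>m. of_bool (X m) :: real)"
  define Z where "Z = {m \<in> VV. \<not> X m}"
  define x where "x = (\<Sum>m\<in>VV. j m) - (\<Sum>m\<in>VV. j2 m)"
  define k where "k = nat \<lceil>x\<rceil>"
  have NNp: "NN = real p powr real n"
    unfolding NN_def card_V using p0 by (simp add: powr_realpow)
  define s where "s = sqrt NN"
  have s1: "s \<ge> 1" using NN_ge1 by (simp add: s_def)
  have ss: "NN = s * s" using NN_pos by (simp add: s_def)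
  have sp: "s = real p powr (real n / 2)"
    unfolding s_def NNp using powr_half_sqrt_powr[of "real p" "real n"] by simp
  have sum_split: "(\<Sum>m\<in>VV. j2 m) + real (card Z) = NN"
  proof -
    have "(\<Sum>m\<in>VV. j2 m) + real (card Z) = (\<Sum>m\<in>VV. of_bool (X m) + of_bool (\<not> X m))"
      using finV by (simp add: j2_def sum.distrib Z_def Int_def)
    also have "\<dots> = (\<Sum>m\<in>VV. 1)" by (rule sum.cong) auto
    also have "\<dots> = NN" by (simp add: NN_def)
    finally show ?thesis .
  qed
  have sumj: "(\<Sum>m\<in>VV. j m) \<le> NN"
  proof -
    have "(\<Sum>m\<in>VV. j m) \<le> (\<Sum>m\<in>VV. 1)" by (rule sum_mono) (use jr in auto)
    thus ?thesis by (simp add: NN_def)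
  qed
  have x_le: "x \<le> real (card Z)" using sum_split sumj unfolding x_def by linarith
  have k_le: "k \<le> card Z"
  proof -
    have "\<lceil>x\<rceil> \<le> int (card Z)" using x_le by (intro ceiling_le) simp
    thus ?thesis unfolding k_def by linarith
  qed
  have k_ge: "real k \<ge> x" unfolding k_def by linarith
  have Sd_eq: "Sd X = - x"
    unfolding Sd_def x_def ff_def j2_def by (simp add: sum_subtractf)
  have x_abs: "x \<le> sqrt (3 * NN)"
  proof -
    have "x \<le> \<bar>Sd X\<bar>" using Sd_eq by simp
    also have "\<bar>Sd X\<bar> = sqrt ((Sd X)^2)" by simp
    also have "\<dots> \<le> sqrt (3 * NN)" using X(4) by (rule real_sqrt_le_mono)
    finally show ?thesis .
  qed
  have k_s: "real k \<le> 3 * s"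
  proof -
    have "real k \<le> max 0 (x + 1)" unfolding k_def
      using ceiling_correct[of x] by (auto simp: max_def)
    also have "\<dots> \<le> sqrt (3 * NN) + 1" using x_abs NN_pos by simp
    also have "sqrt (3 * NN) = sqrt 3 * s" by (simp add: s_def real_sqrt_mult)
    also have "sqrt 3 * s \<le> 2 * s"
    proof -
      have "sqrt 3 \<le> 2" by (rule real_le_lsqrt) auto
      thus ?thesis using s1 by (intro mult_right_mono) auto
    qed
    finally show ?thesis using s1 by linarith
  qed
  obtain S where S: "S \<subseteq> Z" "card S = k" "finite S"
    using obtain_subset_with_card_n[OF k_le] by blast
  have SV: "S \<subseteq> VV" using S(1) by (auto simp: Z_def)
  define j3 where "j3 = (\<lambda>m. if m \<in> S then 1 else j2 m)"
  have j3_01: "\<forall>m\<in>V p n. j3 m = 0 \<or> j3 m = 1" by (simp add: j3_def j2_def)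
  have diff32: "\<bar>j3 m - j2 m\<bar> = of_bool (m \<in> S)" for m
    using S(1) by (auto simp: j3_def j2_def Z_def)
  have D32: "(\<Sum>m\<in>VV. \<bar>j3 m - j2 m\<bar>) = real k"
  proof -
    have "(\<Sum>m\<in>VV. \<bar>j3 m - j2 m\<bar>) = real (card (VV \<inter> {m. m \<in> S}))"
      unfolding diff32 using finV by simp
    also have "VV \<inter> {m. m \<in> S} = S" using SV by auto
    finally show ?thesis using S(2) by simp
  qed
  have sum32: "(\<Sum>m\<in>VV. j3 m) = (\<Sum>m\<in>VV. j2 m) + real k"
  proof -
    have "j3 m = j2 m + of_bool (m \<in> S)" for m using S(1) by (auto simp: j3_def j2_def Z_def)
    hence "(\<Sum>m\<in>VV. j3 m) = (\<Sum>m\<in>VV. j2 m) + (\<Sum>m\<in>VV. of_bool (m \<in> S))"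
      by (simp add: sum.distrib)
    also have "(\<Sum>m\<in>VV. (of_bool (m \<in> S) :: real)) = real k"
      using D32 diff32 by simp
    finally show ?thesis .
  qed
  have Ex_ok: "Ex p n j3 \<ge> Ex p n j"
  proof -
    have "(\<Sum>m\<in>VV. j m) \<le> (\<Sum>m\<in>VV. j3 m)" using sum32 k_ge unfolding x_def by linarith
    thus ?thesis unfolding Ex_def by (intro divide_right_mono) auto
  qed
  have b2: "\<And>x. x \<in> VV \<Longrightarrow> \<bar>j2 x\<bar> \<le> 1" by (simp add: j2_def)
  have b3: "\<And>x. x \<in> VV \<Longrightarrow> \<bar>j3 x\<bar> \<le> 1" by (simp add: j3_def j2_def)
  have L_ok: "\<bar>Lambda3 p n j3 - Lambda3 p n j\<bar> \<le> 16 * real p powr (- real n / 3)"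
  proof -
    have a1: "\<bar>Lambda3 p n j3 - Lambda3 p n j2\<bar> \<le> 3 * real k / NN"
      using L3_pert[where g=j3 and h=j2 and p=p and n=n, OF pp po b3 b2] D32 by (simp add: NN_def)
    have a2: "\<bar>Lambda3 p n j2 - Lambda3 p n j\<bar> \<le> (\<bar>TT X\<bar> + NN) / NN^2"
      using L3_close[of X] by (simp add: j2_def)
    have T: "\<bar>TT X\<bar> \<le> 6 * s^3"
    proof -
      have "\<bar>TT X\<bar> = sqrt ((TT X)^2)" by simp
      also have "\<dots> \<le> sqrt (27 * NN^3)" using X(3) by (rule real_sqrt_le_mono)
      also have "\<dots> = sqrt 27 * s^3" by (simp add: s_def real_sqrt_mult real_sqrt_power)
      also have "\<dots> \<le> 6 * s^3"
      proof -
        have "sqrt 27 \<le> 6" by (rule real_le_lsqrt) auto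
        thus ?thesis using s1 by (intro mult_right_mono) auto
      qed
      finally show ?thesis .
    qed
    have "3 * real k / NN \<le> 9 / s"
    proof -
      have "3 * real k / NN \<le> 3 * (3 * s) / (s * s)" unfolding ss
        by (rule divide_right_mono) (use k_s in auto)
      also have "\<dots> = 9 / s" using s1 by (simp add: field_simps)
      finally show ?thesis .
    qed
    moreover have "(\<bar>TT X\<bar> + NN) / NN^2 \<le> 7 / s"
    proof -
      have h1: "(\<bar>TT X\<bar> + NN) / NN^2 \<le> (6 * s^3 + s * s) / (s * s)^2" unfolding ss
        by (rule divide_right_mono) (use T in auto)
      have h2: "(6 * s^3 + s * s) / (s * s)^2 = 6 / s + 1 / (s * s)"
        using s1 by (simp add: field_simps power2_eq_square power3_eq_cube)
      have "s * 1 \<le> s * s" by (rule mult_left_mono) (use s1 in auto)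
      hence h3: "1 / (s * s) \<le> 1 / s" using s1 by (intro divide_left_mono) auto
      show ?thesis using h1 h2 h3 by (simp add: add_divide_distrib)
    qed
    moreover have "9 / s + 7 / s = 16 / s" by (simp add: add_divide_distrib[symmetric])
    ultimately have "\<bar>Lambda3 p n j3 - Lambda3 p n j\<bar> \<le> 16 / s" using a1 a2 by (smt (verit))
    also have "16 / s = 16 * real p powr (- (real n / 2))" unfolding sp by (simp only: powr_minus_divide)
    also have "\<dots> \<le> 16 * real p powr (- real n / 3)"
      by (intro mult_left_mono powr_mono) (use rp3 in auto)
    finally show ?thesis .
  qed
  have A_ok: "\<bar>avgW p W j3 m - avgW p W j m\<bar> \<le> 16 / real n"
    if W: "is_subspace p n W" and c: "codim p n W \<le> sqrt (real n)" and m: "m \<in> VV" for W m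
  proof -
    define K where "K = real (card W)"
    define E where "E = 3 powr (3 * sqrt (real n) - real n / 2)"
    have Kl: "K \<ge> real p powr (real n - sqrt (real n))" unfolding K_def by (rule card_lower[OF p3 W c])
    have K0: "K > 0" using Kl rp3 by (smt (verit) powr_gt_zero)
    have n1: "real n \<ge> 1" using n36 by simp
    have "E * real n ^ 4 \<le> 1" using small unfolding E_def by (simp only: mult.commute)
    hence E_le: "E \<le> 1 / real n ^ 4" using n1 by (simp add: pos_le_divide_eq)
    have a1: "\<bar>avgW p W j3 m - avgW p W j2 m\<bar> \<le> real k / K"
      using avg_pert[OF p0 W m, of j3 j2] D32 by (simp add: K_def)
    have "real k / K \<le> 3 * s / K" by (rule divide_right_mono) (use k_s K0 in auto)
    also have "\<dots> = 3 * (real p powr (real n / 2) / K)" unfolding sp by simp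
    also have "\<dots> \<le> 3 * E" unfolding E_def using numeric1(2)[OF rp3 n36 Kl] by simp
    also have "\<dots> \<le> 3 / real n ^ 4" using E_le by simp
    also have "\<dots> \<le> 8 / real n"
    proof -
      have "real n \<le> real n ^ 4" using n1 by (simp add: power_increasing[of 1 4 "real n", simplified])
      hence "3 / real n ^ 4 \<le> 3 / real n" using n1 by (intro divide_left_mono) auto
      also have "\<dots> \<le> 8 / real n" using n1 by (simp add: divide_right_mono)
      finally show ?thesis .
    qed
    finally have t1: "\<bar>avgW p W j3 m - avgW p W j2 m\<bar> \<le> 8 / real n" using a1 by linarith
    have eqa: "avgW p W j2 m - avgW p W j m = avgW p W (ff X) m"
      by (simp add: avgW_def ff_def j2_def diff_divide_distrib sum_subtractf)
    have "(avgW p W (ff X) m)^4 \<le> NN^2 * QQ X / K^3"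
      using avg4[OF p0 W m, of "ff X"] by (simp add: QQ_def AA_def NN_def K_def)
    also have "\<dots> \<le> NN^2 * 6 / K^3"
      by (intro divide_right_mono mult_left_mono) (use X(2) K0 in auto)
    also have "\<dots> = 6 * (NN^2 / K^3)" by simp
    also have "\<dots> \<le> 6 * E" unfolding E_def NNp using numeric1(1)[OF rp3 n36 Kl] by simp
    also have "\<dots> \<le> 6 / real n ^ 4" using E_le by simp
    also have "\<dots> \<le> (8 / real n)^4" using n1 by (simp add: power_divide divide_right_mono)
    finally have "\<bar>avgW p W (ff X) m\<bar>^4 \<le> (8 / real n)^4" by simp
    hence t2: "\<bar>avgW p W j2 m - avgW p W j m\<bar> \<le> 8 / real n"
      unfolding eqa by (rule power_le_imp_le_base[of _ 3, simplified]) (use n1 in simp)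
    show ?thesis using t1 t2 by linarith
  qed
  show ?thesis
  proof (intro exI[of _ j3] conjI j3_01 Ex_ok L_ok allI impI ballI)
    fix W m assume "is_subspace p n W \<and> codim p n W \<le> sqrt (real n)" "m \<in> V p n"
    thus "\<bar>avgW p W j3 m - avgW p W j m\<bar> \<le> 16 / real n" using A_ok by blast
  qed
qed

end


theorem lemma1:
  fixes p :: nat
  assumes "prime p" and "odd p"
  shows "\<exists>C::real. \<exists>N::nat. \<forall>n\<ge>N. \<forall>j :: (nat \<Rightarrow> nat) \<Rightarrow> real.
    (\<forall>m\<in>V p n. 0 \<le> j m \<and> j m \<le> 1) \<longrightarrow>
    (\<exists>j2 :: (nat \<Rightarrow> nat) \<Rightarrow> real.
       (\<forall>m\<in>V p n. j2 m = 0 \<or> j2 m = 1) \<and>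
       Ex p n j2 \<ge> Ex p n j \<and>
       \<bar>Lambda3 p n j2 - Lambda3 p n j\<bar> \<le> C * real p powr (- real n / 3) \<and>
       (\<forall>W. is_subspace p n W \<and> codim p n W \<le> sqrt (real n) \<longrightarrow>
          (\<forall>m\<in>V p n. \<bar>avgW p W j2 m - avgW p W j m\<bar> \<le> C / real n)))"
proof -
  have lim: "(\<lambda>n::nat. real n ^ 4 * 3 powr (3 * sqrt (real n) - real n / 2)) \<longlonglongrightarrow> 0"
    by real_asymp
  have "eventually (\<lambda>n::nat. real n ^ 4 * 3 powr (3 * sqrt (real n) - real n / 2) < 1) sequentially"
    by (rule order_tendstoD(2)[OF lim]) simp
  then obtain N0 where N0: "\<And>n. n \<ge> N0 \<Longrightarrow> real n ^ 4 * 3 powr (3 * sqrt (real n) - real n / 2) < 1"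
    by (auto simp: eventually_sequentially)
  show ?thesis
  proof (intro exI[of _ "16::real"] exI[of _ "max N0 36"] allI impI)
    fix n :: nat and j :: "(nat \<Rightarrow> nat) \<Rightarrow> real"
    assume n: "max N0 36 \<le> n" and jr: "\<forall>m\<in>V p n. 0 \<le> j m \<and> j m \<le> 1"
    interpret rr p n j by unfold_locales (use assms jr in auto)
    have n36: "real n \<ge> 36" using n by simp
    have sm: "real n ^ 4 * 3 powr (3 * sqrt (real n) - real n / 2) \<le> 1" using N0[of n] n by simp
    show "\<exists>j2 :: (nat \<Rightarrow> nat) \<Rightarrow> real.
       (\<forall>m\<in>V p n. j2 m = 0 \<or> j2 m = 1) \<and>
       Ex p n j2 \<ge> Ex p n j \<and>
       \<bar>Lambda3 p n j2 - Lambda3 p n j\<bar> \<le> 16 * real p powr (- real n / 3) \<and>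
       (\<forall>W. is_subspace p n W \<and> codim p n W \<le> sqrt (real n) \<longrightarrow>
          (\<forall>m\<in>V p n. \<bar>avgW p W j2 m - avgW p W j m\<bar> \<le> 16 / real n))"
      by (rule main_n[OF n36 sm])
  qed
qed

end
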